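(* Let $\mathcal G$ be the graph defined below. There is no mixed $1$-stack $1$-queue layout $(<,\{S,Q\})$ of $\mathcal G$ for which there exist edges $(v_1,v_2)\in Q$, $(u_1,u_2)\in S$ and a pair of twins $s,t$ with $v_1<u_1<s<t<u_2<v_2$.
   Context: Graph $\mathcal G$: take two vertices $A,B$ and $19$ copies of a gadget $H$, identified at $A$ and $B$. Each copy of $H$ consists of two further vertices $s,t$ (called twins) joined by the twin edge $(s,t)$, the edges $(A,s),(A,t),(B,s),(B,t)$, and seven further vertices (called connectors), each of degree $2$ and adjacent to exactly $s$ and $t$. ($A$ and $B$ are not adjacent.) For a vertex ordering $<$ and an edge $e$, let $L(e)<R(e)$ be its endpoints; edges $e,f$ cross if $L(e)<L(f)<R(e)<R(f)$ and nest if $L(e)<L(f)<R(f)<R(e)$. A stack is an edge set with no two crossing edges, a queue an edge set with no two nested edges. A mixed $1$-stack $1$-queue layout is a vertex ordering $<$ together with a partition of the edge set into a stack $S$ and a queue $Q$. *)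

theory Defs
  imports Main
begin

text \<open>Vertices of the graph G: the two hubs A, B; for each copy i < 19 of the
gadget H the twins Sv i, Tv i and the connectors Cv i j (j < 7).\<close>
datatype vert = VA | VB | Sv nat | Tv nat | Cv nat nat

definition ncopies :: nat where "ncopies = 19"
definition nconn :: nat where "nconn = 7"

definition verts :: "vert set" where
  "verts = {VA, VB} \<union> {Sv i | i. i < ncopies} \<union> {Tv i | i. i < ncopies}
           \<union> {Cv i j | i j. i < ncopies \<and> j < nconn}"

definition edges :: "(vert \<times> vert) set" where
  "edges = {(Sv i, Tv i) | i. i < ncopies}
         \<union> {(VA, Sv i) | i. i < ncopies} \<union> {(VA, Tv i) | i. i < ncopies}
         \<union> {(VB, Sv i) | i. i < ncopies} \<union> {(VB, Tv i) | i. i < ncopies}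
         \<union> {(Sv i, Cv i j) | i j. i < ncopies \<and> j < nconn}
         \<union> {(Tv i, Cv i j) | i j. i < ncopies \<and> j < nconn}"

text \<open>A vertex ordering is given by an injective position map pos on verts.
L(e), R(e): positions of the left/right endpoint.\<close>
definition Lp :: "(vert \<Rightarrow> nat) \<Rightarrow> vert \<times> vert \<Rightarrow> nat" where
  "Lp pos e = min (pos (fst e)) (pos (snd e))"
definition Rp :: "(vert \<Rightarrow> nat) \<Rightarrow> vert \<times> vert \<Rightarrow> nat" where
  "Rp pos e = max (pos (fst e)) (pos (snd e))"

definition crosses :: "(vert \<Rightarrow> nat) \<Rightarrow> vert \<times> vert \<Rightarrow> vert \<times> vert \<Rightarrow> bool" where
  "crosses pos e f \<longleftrightarrow> Lp pos e < Lp pos f \<and> Lp pos f < Rp pos e \<and> Rp pos e < Rp pos f"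
definition nests :: "(vert \<Rightarrow> nat) \<Rightarrow> vert \<times> vert \<Rightarrow> vert \<times> vert \<Rightarrow> bool" where
  "nests pos e f \<longleftrightarrow> Lp pos e < Lp pos f \<and> Lp pos f < Rp pos f \<and> Rp pos f < Rp pos e"

definition is_stack :: "(vert \<Rightarrow> nat) \<Rightarrow> (vert \<times> vert) set \<Rightarrow> bool" where
  "is_stack pos S \<longleftrightarrow> (\<forall>e\<in>S. \<forall>f\<in>S. \<not> crosses pos e f)"
definition is_queue :: "(vert \<Rightarrow> nat) \<Rightarrow> (vert \<times> vert) set \<Rightarrow> bool" where
  "is_queue pos Q \<longleftrightarrow> (\<forall>e\<in>Q. \<forall>f\<in>Q. \<not> nests pos e f)"

definition mixed_layout ::
  "(vert \<Rightarrow> nat) \<Rightarrow> (vert \<times> vert) set \<Rightarrow> (vert \<times> vert) set \<Rightarrow> bool" where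
  "mixed_layout pos S Q \<longleftrightarrow> inj_on pos verts \<and> S \<union> Q = edges \<and> S \<inter> Q = {}
     \<and> is_stack pos S \<and> is_queue pos Q"

end

theory Submission
  imports Defs
begin

lemma key_arith:
  fixes le lf rf re x y p :: nat
  assumes ord: "le < lf" "lf < x" "x < y" "y < rf" "rf < re"
    and pnx: "p \<noteq> x" "p \<noteq> y"
    and g1: "(g1S \<and> \<not> (lf < min x p \<and> min x p < rf \<and> rf < max x p) \<and> \<not> (min x p < lf \<and> lf < max x p \<and> max x p < rf))
           \<or> (\<not> g1S \<and> \<not> (le < min x p \<and> min x p < max x p \<and> max x p < re))"
    and g2: "(g2S \<and> \<not> (lf < min y p \<and> min y p < rf \<and> rf < max y p) \<and> \<not> (min y p < lf \<and> lf < max y p \<and> max y p < rf))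
           \<or> (\<not> g2S \<and> \<not> (le < min y p \<and> min y p < max y p \<and> max y p < re))"
  shows "((p \<le> le \<or> re \<le> p) \<and> \<not> g1S \<and> \<not> g2S) \<or> (lf \<le> p \<and> p \<le> rf \<and> g1S \<and> g2S)"
  using assms by (cases "p < x"; cases "p < y"; auto simp: min_def max_def split: if_splits)

lemma conn_edges: "i < ncopies \<Longrightarrow> j < nconn \<Longrightarrow> (Sv i, Cv i j) \<in> edges \<and> (Tv i, Cv i j) \<in> edges"
  unfolding edges_def by blast

lemma edges_verts: "(a, b) \<in> edges \<Longrightarrow> a \<in> verts \<and> b \<in> verts"
  unfolding edges_def verts_def by auto

lemma conn_verts: "i < ncopies \<Longrightarrow> j < nconn \<Longrightarrow> Cv i j \<in> verts \<and> Sv i \<in> verts \<and> Tv i \<in> verts"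
  unfolding verts_def by blast

theorem lemma2:
  shows "\<not> (\<exists>pos S Q. mixed_layout pos S Q \<and>
           (\<exists>e\<in>Q. \<exists>f\<in>S. \<exists>i<ncopies. \<exists>s t. {s, t} = {Sv i, Tv i} \<and>
              Lp pos e < Lp pos f \<and> Lp pos f < pos s \<and> pos s < pos t \<and>
              pos t < Rp pos f \<and> Rp pos f < Rp pos e))"
proof
  assume "\<exists>pos S Q. mixed_layout pos S Q \<and>
           (\<exists>e\<in>Q. \<exists>f\<in>S. \<exists>i<ncopies. \<exists>s t. {s, t} = {Sv i, Tv i} \<and>
              Lp pos e < Lp pos f \<and> Lp pos f < pos s \<and> pos s < pos t \<and>
              pos t < Rp pos f \<and> Rp pos f < Rp pos e)"
  then obtain pos S Q e f i s t where ml: "mixed_layout pos S Q" and eQ: "e \<in> Q" and fS: "f \<in> S"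
    and i: "i < ncopies" and st: "{s, t} = {Sv i, Tv i}"
    and o1: "Lp pos e < Lp pos f" and o2: "Lp pos f < pos s" and o3: "pos s < pos t"
    and o4: "pos t < Rp pos f" and o5: "Rp pos f < Rp pos e"
    by blast
  have inj: "inj_on pos verts" and SQ: "S \<union> Q = edges" "S \<inter> Q = {}"
    and stk: "is_stack pos S" and que: "is_queue pos Q"
    using ml unfolding mixed_layout_def by auto
  define le where "le = Lp pos e"
  define lf where "lf = Lp pos f"
  define rf where "rf = Rp pos f"
  define re where "re = Rp pos e"
  define x where "x = pos s"
  define y where "y = pos t"
  have ord: "le < lf" "lf < x" "x < y" "y < rf" "rf < re"
    using o1 o2 o3 o4 o5 unfolding le_def lf_def rf_def re_def x_def y_def by auto
  have stv: "s \<in> verts" "t \<in> verts" "s \<noteq> t"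
    using st conn_verts[OF i, of 0] o3 unfolding nconn_def by (auto simp: doubleton_eq_iff)
  define P where "P = (\<lambda>j. pos (Cv i j))"
  have cS: "(s, Cv i j) \<in> edges" "(t, Cv i j) \<in> edges" if "j < nconn" for j
    using conn_edges[OF i that] st by (auto simp: doubleton_eq_iff)
  have cne: "P j \<noteq> x" "P j \<noteq> y" if "j < nconn" for j
  proof -
    have "Cv i j \<noteq> s" "Cv i j \<noteq> t" using st by (auto simp: doubleton_eq_iff)
    then show "P j \<noteq> x" "P j \<noteq> y" unfolding P_def x_def y_def
      using inj conn_verts[OF i that] stv by (auto dest: inj_onD)
  qed
  have Pinj: "P j \<noteq> P j'" if "j < nconn" "j' < nconn" "j \<noteq> j'" for j j'
    unfolding P_def using inj conn_verts[OF i that(1)] conn_verts[OF i that(2)] that(3)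
    by (auto dest: inj_onD)
  have inS: "g \<in> S \<Longrightarrow> \<not> crosses pos f g \<and> \<not> crosses pos g f" for g
    using stk fS unfolding is_stack_def by blast
  have inQ: "g \<in> Q \<Longrightarrow> \<not> nests pos e g" for g
    using que eQ unfolding is_queue_def by blast
  have stQ: "g \<in> Q \<longleftrightarrow> g \<notin> S" if "g \<in> edges" for g using SQ that by blast
  have key: "((P j \<le> le \<or> re \<le> P j) \<and> (s, Cv i j) \<in> Q \<and> (t, Cv i j) \<in> Q)
     \<or> (lf \<le> P j \<and> P j \<le> rf \<and> (s, Cv i j) \<in> S \<and> (t, Cv i j) \<in> S)" if j: "j < nconn" for j
  proof -
    have g1: "((s, Cv i j) \<in> S \<and> \<not> (lf < min x (P j) \<and> min x (P j) < rf \<and> rf < max x (P j)) \<and> \<not> (min x (P j) < lf \<and> lf < max x (P j) \<and> max x (P j) < rf))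
           \<or> (\<not> (s, Cv i j) \<in> S \<and> \<not> (le < min x (P j) \<and> min x (P j) < max x (P j) \<and> max x (P j) < re))"
      using inS[of "(s, Cv i j)"] inQ[of "(s, Cv i j)"] stQ[OF cS(1)[OF j]]
      unfolding crosses_def nests_def Lp_def Rp_def P_def x_def le_def lf_def re_def rf_def
        by (auto simp: Lp_def Rp_def)
    have g2: "((t, Cv i j) \<in> S \<and> \<not> (lf < min y (P j) \<and> min y (P j) < rf \<and> rf < max y (P j)) \<and> \<not> (min y (P j) < lf \<and> lf < max y (P j) \<and> max y (P j) < rf))
           \<or> (\<not> (t, Cv i j) \<in> S \<and> \<not> (le < min y (P j) \<and> min y (P j) < max y (P j) \<and> max y (P j) < re))"
      using inS[of "(t, Cv i j)"] inQ[of "(t, Cv i j)"] stQ[OF cS(2)[OF j]]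
      unfolding crosses_def nests_def Lp_def Rp_def P_def y_def le_def lf_def re_def rf_def
        by (auto simp: Lp_def Rp_def)
    show ?thesis using key_arith[OF ord cne[OF j] g1 g2] stQ[OF cS(1)[OF j]] stQ[OF cS(2)[OF j]] by blast
  qed
  have LR: "Lp pos (s, Cv i j) = min x (P j)" "Rp pos (s, Cv i j) = max x (P j)"
    "Lp pos (t, Cv i j) = min y (P j)" "Rp pos (t, Cv i j) = max y (P j)" for j
    unfolding Lp_def Rp_def P_def x_def y_def by auto
  define reg where "reg = (\<lambda>p::nat. if p \<le> le then 0 else if p < x then 1 else if p < y then 2
     else if p < re then 3 else (4::nat))"
  have pair: False if j: "j < nconn" "j' < nconn" and lt: "P j < P j'" and rg: "reg (P j) = reg (P j')" for j j'
  proof -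
    note k = key[OF j(1)] key[OF j(2)]
    note n = cne[OF j(1)] cne[OF j(2)]
    consider "P j' \<le> le" | "lf \<le> P j" "P j' < x" | "x < P j" "P j' < y" | "y < P j" "P j' \<le> rf" | "re \<le> P j"
      using k n ord lt rg unfolding reg_def by (auto split: if_splits)
    then show False
    proof cases
      case 1
      then have "(t, Cv i j) \<in> Q" "(s, Cv i j') \<in> Q" using k ord lt by auto
      moreover have "nests pos (t, Cv i j) (s, Cv i j')" unfolding nests_def LR
        using 1 ord lt by (simp add: min_def max_def)
      ultimately show False using que unfolding is_queue_def by blast
    next
      case 2
      then have "(s, Cv i j) \<in> S" "(t, Cv i j') \<in> S" using k ord lt by auto
      moreover have "crosses pos (s, Cv i j) (t, Cv i j')" unfolding crosses_def LR
        using 2 ord lt by (simp add: min_def max_def)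
      ultimately show False using stk unfolding is_stack_def by blast
    next
      case 3
      then have "(t, Cv i j) \<in> S" "(s, Cv i j') \<in> S" using k ord lt by auto
      moreover have "crosses pos (s, Cv i j') (t, Cv i j)" unfolding crosses_def LR
        using 3 ord lt by (simp add: min_def max_def)
      ultimately show False using stk unfolding is_stack_def by blast
    next
      case 4
      then have "(s, Cv i j) \<in> S" "(t, Cv i j') \<in> S" using k ord lt by auto
      moreover have "crosses pos (s, Cv i j) (t, Cv i j')" unfolding crosses_def LR
        using 4 ord lt by (simp add: min_def max_def)
      ultimately show False using stk unfolding is_stack_def by blast
    next
      case 5
      then have "(t, Cv i j) \<in> Q" "(s, Cv i j') \<in> Q" using k ord lt by auto
      moreover have "nests pos (s, Cv i j') (t, Cv i j)" unfolding nests_def LR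
        using 5 ord lt by (simp add: min_def max_def)
      ultimately show False using que unfolding is_queue_def by blast
    qed
  qed
  have "\<not> inj_on (reg \<circ> P) {..<nconn}"
  proof
    assume "inj_on (reg \<circ> P) {..<nconn}"
    then have "card ((reg \<circ> P) ` {..<nconn}) = 7" using card_image[of "reg \<circ> P" "{..<nconn}"] by (simp add: nconn_def)
    moreover have "(reg \<circ> P) ` {..<nconn} \<subseteq> {..<5}" unfolding reg_def by auto
    then have "card ((reg \<circ> P) ` {..<nconn}) \<le> 5" using card_mono[of "{..<5::nat}"] by fastforce
    ultimately show False by simp
  qed
  then obtain j j' where jj: "j < nconn" "j' < nconn" "j \<noteq> j'" "reg (P j) = reg (P j')"
    unfolding inj_on_def by auto
  show False
  proof (cases "P j < P j'")
    case True then show ?thesis using pair jj by blast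
  next
    case False
    then have "P j' < P j" using Pinj[OF jj(1-3)] by auto
    then show ?thesis using pair jj by metis
  qed
qed

end
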